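(* Let $K$ be the correlation kernel described in the context. Let $t,t'$ be integers with $u_0<t<t+1<u_N$ and $u_0<t'<u_N$, let $j,j'\in\mathbb Z+\frac12$, and put $m=t+\frac12$. If $m\in D^+$, then $$ K((t+1,j),(t',j'))-K((t,j),(t',j'))+x^+_m\,K((t,j-1),(t',j'))=\delta_{t+1,t'}\,\delta_{j,j'} . $$ If $m\in D^-$, then $$ K((t+1,j),(t',j'))-K((t,j),(t',j'))+x^-_m\,K((t,j+1),(t',j'))=\delta_{t+1,t'}\,\delta_{j,j'} . $$
   Context: Fix an integer $N\ge1$ and integers $u_0<v_1<u_1<\dots<u_{N-1}<v_N<u_N$. For each integer $t$ with $u_0<t<u_N$ fix $q_t\in(0,1)$. For a half-integer $m\in(u_0,u_N)$ write $m\in D^+$ if $v_i<m<u_i$ for some $i$, and $m\in D^-$ if $u_{i-1}<m<v_i$ for some $i$. Put $x^+_m=\prod_{t\in\mathbb Z,\,u_0<t<m}q_t$ and $x^-_m=(x^+_m)^{-1}$. Define $$ \Phi_+(z,t)=\prod_{m\in D^+,\,m>t}(1-zx^+_m),\qquad \Phi_-(z,t)=\prod_{m\in D^-,\,m<t}(1-x^-_m/z), $$ $$ R(t)=\min_{m\in D^+,m>t}1/x^+_m\ (+\infty\text{ if empty}),\qquad R^*(t)=\max_{m\in D^-,m<t}x^-_m\ (0\text{ if empty}). $$ For integers $t_1,t_2\in(u_0,u_N)$ and $j_1,j_2\in\mathbb Z+\frac12$, $$ K((t_1,j_1),(t_2,j_2))=\frac{1}{(2\pi i)^2}\oint_{|z|=\rho_1}\oint_{|w|=\rho_2}\frac{\Phi_-(z,t_1)\Phi_+(w,t_2)}{\Phi_+(z,t_1)\Phi_-(w,t_2)}\frac{z^{-j_1-\frac12}w^{j_2-\frac12}}{z-w}\,dz\,dw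 . $$ The circles are positively oriented, with $\rho_1<R(t_1)$ and $\rho_2>R^*(t_2)$; moreover $\rho_2<\rho_1$ if $t_1\ge t_2$, and $\rho_1<\rho_2$ if $t_1<t_2$. This $K$ is the correlation kernel of the random sequence of interlacing partitions (diagonal slices of a random skew plane partition) with weight $\prod q_t^{|\lambda(t)|}$. *)

theory Defs
  imports "HOL-Complex_Analysis.Complex_Analysis"
begin

text \<open>Half-integers are represented as real numbers m with m - 1/2 an integer.
  The data: u :: nat => int gives u_0,...,u_N, v :: nat => int gives v_1,...,v_N,
  q :: int => real gives the weights q_t.\<close>

definition halfint :: "real set" where
  "halfint = {m. m - 1/2 \<in> \<int>}"

definition Dplus :: "nat \<Rightarrow> (nat \<Rightarrow> int) \<Rightarrow> (nat \<Rightarrow> int) \<Rightarrow> real set" where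
  "Dplus N u v = {m \<in> halfint. real_of_int (u 0) < m \<and> m < real_of_int (u N) \<and>
      (\<exists>i\<in>{1..N}. real_of_int (v i) < m \<and> m < real_of_int (u i))}"

definition Dminus :: "nat \<Rightarrow> (nat \<Rightarrow> int) \<Rightarrow> (nat \<Rightarrow> int) \<Rightarrow> real set" where
  "Dminus N u v = {m \<in> halfint. real_of_int (u 0) < m \<and> m < real_of_int (u N) \<and>
      (\<exists>i\<in>{1..N}. real_of_int (u (i - 1)) < m \<and> m < real_of_int (v i))}"

definition xplus :: "(nat \<Rightarrow> int) \<Rightarrow> (int \<Rightarrow> real) \<Rightarrow> real \<Rightarrow> real" where
  "xplus u q m = (\<Prod>s\<in>{s::int. u 0 < s \<and> real_of_int s < m}. q s)"

definition xminus :: "(nat \<Rightarrow> int) \<Rightarrow> (int \<Rightarrow> real) \<Rightarrow> real \<Rightarrow> real" where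
  "xminus u q m = inverse (xplus u q m)"

definition PhiPlus :: "nat \<Rightarrow> (nat \<Rightarrow> int) \<Rightarrow> (nat \<Rightarrow> int) \<Rightarrow> (int \<Rightarrow> real) \<Rightarrow> complex \<Rightarrow> int \<Rightarrow> complex" where
  "PhiPlus N u v q z t =
     (\<Prod>m\<in>{m \<in> Dplus N u v. real_of_int t < m}. 1 - z * complex_of_real (xplus u q m))"

definition PhiMinus :: "nat \<Rightarrow> (nat \<Rightarrow> int) \<Rightarrow> (nat \<Rightarrow> int) \<Rightarrow> (int \<Rightarrow> real) \<Rightarrow> complex \<Rightarrow> int \<Rightarrow> complex" where
  "PhiMinus N u v q z t =
     (\<Prod>m\<in>{m \<in> Dminus N u v. m < real_of_int t}. 1 - complex_of_real (xminus u q m) / z)"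

definition admissible_radii ::
  "nat \<Rightarrow> (nat \<Rightarrow> int) \<Rightarrow> (nat \<Rightarrow> int) \<Rightarrow> (int \<Rightarrow> real) \<Rightarrow> int \<Rightarrow> int \<Rightarrow> real \<Rightarrow> real \<Rightarrow> bool" where
  "admissible_radii N u v q t1 t2 \<rho>1 \<rho>2 \<longleftrightarrow>
     0 < \<rho>1 \<and> 0 < \<rho>2 \<and>
     (\<forall>m\<in>Dplus N u v. real_of_int t1 < m \<longrightarrow> \<rho>1 < 1 / xplus u q m) \<and>
     (\<forall>m\<in>Dminus N u v. m < real_of_int t2 \<longrightarrow> xminus u q m < \<rho>2) \<and>
     (t1 \<ge> t2 \<longrightarrow> \<rho>2 < \<rho>1) \<and> (t1 < t2 \<longrightarrow> \<rho>1 < \<rho>2)"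

text \<open>The double contour integral for given radii. Exponents -j1-1/2 and j2-1/2 are
  integers for half-integer j1, j2; they are extracted with floor.\<close>
definition Kint ::
  "nat \<Rightarrow> (nat \<Rightarrow> int) \<Rightarrow> (nat \<Rightarrow> int) \<Rightarrow> (int \<Rightarrow> real) \<Rightarrow> real \<Rightarrow> real \<Rightarrow>
   int \<Rightarrow> real \<Rightarrow> int \<Rightarrow> real \<Rightarrow> complex" where
  "Kint N u v q \<rho>1 \<rho>2 t1 j1 t2 j2 =
     contour_integral (circlepath 0 \<rho>1) (\<lambda>z.
       contour_integral (circlepath 0 \<rho>2) (\<lambda>w.
         (PhiMinus N u v q z t1 * PhiPlus N u v q w t2) /
         (PhiPlus N u v q z t1 * PhiMinus N u v q w t2) *
         (z powi \<lfloor>- j1 - 1/2\<rfloor> * w powi \<lfloor>j2 - 1/2\<rfloor>) / (z - w)))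
     / (2 * pi * \<i>)^2"

definition K ::
  "nat \<Rightarrow> (nat \<Rightarrow> int) \<Rightarrow> (nat \<Rightarrow> int) \<Rightarrow> (int \<Rightarrow> real) \<Rightarrow> int \<Rightarrow> real \<Rightarrow> int \<Rightarrow> real \<Rightarrow> complex" where
  "K N u v q t1 j1 t2 j2 =
     (let \<rho> = (SOME \<rho>. admissible_radii N u v q t1 t2 (fst \<rho>) (snd \<rho>))
      in Kint N u v q (fst \<rho>) (snd \<rho>) t1 j1 t2 j2)"

end

theory Submission
  imports Defs
begin


lemma circ_eq:
  fixes f :: "complex \<Rightarrow> complex"
  assumes "open S" "f holomorphic_on S" "0 < r1" "0 < r2"
    and ann: "\<And>z. min r1 r2 \<le> norm z \<Longrightarrow> norm z \<le> max r1 r2 \<Longrightarrow> z \<in> S"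
  shows "contour_integral (circlepath 0 r1) f = contour_integral (circlepath 0 r2) f"
proof (rule Cauchy_theorem_homotopic_loops[OF _ assms(1,2)])
  show "homotopic_loops S (circlepath 0 r1) (circlepath 0 r2)"
  proof (rule homotopic_loops_linear)
    fix s :: real assume s: "s \<in> {0..1}"
    show "closed_segment (circlepath 0 r1 s) (circlepath 0 r2 s) \<subseteq> S"
    proof
      fix x assume "x \<in> closed_segment (circlepath 0 r1 s) (circlepath 0 r2 s)"
      then obtain c where c: "0 \<le> c" "c \<le> 1" and x: "x = (1 - c) *\<^sub>R circlepath 0 r1 s + c *\<^sub>R circlepath 0 r2 s"
        unfolding in_segment by blast
      define e where "e = exp (2 * of_real pi * \<i> * of_real s)"
      have ne: "norm e = 1" unfolding e_def by (simp add: norm_exp_eq_Re)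
      have "x = of_real ((1 - c) * r1 + c * r2) * e"
        unfolding x circlepath_def part_circlepath_def linepath_def e_def by (simp add: scaleR_conv_of_real algebra_simps)
      then have nx: "norm x = \<bar>(1 - c) * r1 + c * r2\<bar>" using ne by (simp only: norm_mult norm_of_real) simp
      have lo: "min r1 r2 \<le> (1 - c) * r1 + c * r2"
      proof -
        have "(1-c) * min r1 r2 \<le> (1-c) * r1" using c by (intro mult_left_mono) auto
        moreover have "c * min r1 r2 \<le> c * r2" using c by (intro mult_left_mono) auto
        ultimately show ?thesis by (simp add: algebra_simps)
      qed
      have hi: "(1 - c) * r1 + c * r2 \<le> max r1 r2"
      proof -
        have "(1-c) * r1 \<le> (1-c) * max r1 r2" using c by (intro mult_left_mono) auto
        moreover have "c * r2 \<le> c * max r1 r2" using c by (intro mult_left_mono) auto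
        ultimately show ?thesis by (simp add: algebra_simps)
      qed
      have "0 < min r1 r2" using assms(3,4) by simp
      then have "norm x = (1 - c) * r1 + c * r2" using lo nx by linarith
      then show "x \<in> S" using ann lo hi by simp
    qed
  qed auto
qed auto

definition hB :: "(complex \<Rightarrow> complex) \<Rightarrow> real \<Rightarrow> complex \<Rightarrow> complex" where
  "hB B r z = contour_integral (circlepath 0 r) (\<lambda>w. B w / (w - z))"

definition JJ :: "(complex \<Rightarrow> complex) \<Rightarrow> (complex \<Rightarrow> complex) \<Rightarrow> real \<Rightarrow> real \<Rightarrow> complex" where
  "JJ A B r1 r2 = contour_integral (circlepath 0 r1) (\<lambda>z. A z * hB B r2 z)"

lemma hB_integrable:
  assumes "continuous_on (sphere 0 r) B" "0 < r" "norm z \<noteq> r"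
  shows "(\<lambda>w. B w / (w - z)) contour_integrable_on circlepath 0 r"
proof (rule contour_integrable_continuous_circlepath)
  have "\<forall>w\<in>sphere 0 r. w - z \<noteq> 0" using assms(3) by auto
  then show "continuous_on (path_image (circlepath 0 r)) (\<lambda>w. B w / (w - z))"
    using assms by (auto simp: path_image_circlepath_nonneg intro!: continuous_intros)
qed

lemma hB_holo:
  assumes "continuous_on (sphere 0 r) B" "0 < r"
  shows "hB B r holomorphic_on (- sphere 0 r)"
proof -
  have pi: "path_image (circlepath 0 r) = sphere 0 r" using assms by (simp add: path_image_circlepath_nonneg)
  have "\<exists>f'. (hB B r has_field_derivative f') (at w)" if w: "w \<in> - sphere 0 r" for w
  proof -
    have "(hB B r has_field_derivative (of_nat 1 * contour_integral (circlepath 0 r) ((\<lambda>k w u. B u / (u-w)^k) (Suc 1) w))) (at w)"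
    proof (rule Cauchy_next_derivative(2)[where B="2*pi*r" and S=UNIV])
      show "continuous_on (path_image (circlepath 0 r)) B" using assms pi by simp
      show "norm (vector_derivative (circlepath 0 r) (at t)) \<le> 2*pi*r" for t
        using assms by (simp add: vector_derivative_circlepath norm_mult)
      show "((\<lambda>k w u. B u / (u-w)^k) 1 w' has_contour_integral hB B r w') (circlepath 0 r)"
        if "w' \<in> UNIV - path_image (circlepath 0 r)" for w'
      proof -
        have "norm w' \<noteq> r" using that pi by auto
        then show ?thesis unfolding hB_def
          using hB_integrable[OF assms] has_contour_integral_integral by simp
      qed
    qed (use w pi in auto)
    then show ?thesis by blast
  qed
  moreover have "open (- sphere (0::complex) r)" by (simp add: open_Compl)
  ultimately show ?thesis by (subst holomorphic_on_open) auto
qed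

lemma hB_eq:
  assumes "open SB" "B holomorphic_on SB" "0 < r" "0 < r'"
    and ann: "\<And>w. min r r' \<le> norm w \<Longrightarrow> norm w \<le> max r r' \<Longrightarrow> w \<in> SB"
    and z: "norm z < min r r' \<or> max r r' < norm z"
  shows "hB B r z = hB B r' z"
  unfolding hB_def
proof (rule circ_eq[where S="SB - {z}"])
  show "open (SB - {z})" using assms(1) by auto
  show "(\<lambda>w. B w / (w - z)) holomorphic_on SB - {z}"
    using assms(2) by (auto intro!: holomorphic_intros holomorphic_on_subset[OF assms(2)])
  show "w \<in> SB - {z}" if "min r r' \<le> norm w" "norm w \<le> max r r'" for w
    using ann[OF that] that z by auto
qed (use assms in auto)

lemma hB_jump:
  assumes "open SB" "B holomorphic_on SB" "0 < r" "r < norm z" "norm z < r'"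
    and ann: "\<And>w. r \<le> norm w \<Longrightarrow> norm w \<le> r' \<Longrightarrow> w \<in> SB"
  shows "hB B r' z - hB B r z = 2 * of_real pi * \<i> * B z"
proof -
  define g where "g = (\<lambda>w. if w = z then deriv B z else (B w - B z) / (w - z))"
  have zS: "z \<in> SB" using ann assms by auto
  have gh: "g holomorphic_on SB" unfolding g_def
    by (rule pole_lemma[OF assms(2)]) (use zS assms(1) interior_open in auto)
  have r'pos: "0 < r'" using assms by linarith
  have pi1: "path_image (circlepath 0 r) \<subseteq> SB" using assms ann by (auto simp: path_image_circlepath_nonneg)
  have pi2: "path_image (circlepath 0 r') \<subseteq> SB" using assms ann by (auto simp: path_image_circlepath_nonneg)
  have g1: "(g has_contour_integral contour_integral (circlepath 0 r) g) (circlepath 0 r)"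
    by (rule has_contour_integral_integral, rule contour_integrable_holomorphic_simple[OF gh assms(1)]) (use pi1 in auto)
  have g2: "(g has_contour_integral contour_integral (circlepath 0 r') g) (circlepath 0 r')"
    by (rule has_contour_integral_integral, rule contour_integrable_holomorphic_simple[OF gh assms(1)]) (use pi2 in auto)
  have geq: "contour_integral (circlepath 0 r) g = contour_integral (circlepath 0 r') g"
    by (rule circ_eq[OF assms(1) gh assms(3) r'pos]) (use ann assms in auto)
  have c2: "((\<lambda>w. B z / (w - z)) has_contour_integral (2 * of_real pi * \<i> * B z)) (circlepath 0 r')"
    using Cauchy_integral_circlepath_simple[of "\<lambda>_. B z" 0 r' z] assms by simp
  have c1: "((\<lambda>w. B z / (w - z)) has_contour_integral 0) (circlepath 0 r)"
  proof (rule Cauchy_theorem_convex_simple[where S="ball 0 (norm z)"])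
    show "(\<lambda>w. B z / (w - z)) holomorphic_on ball 0 (norm z)"
      by (auto intro!: holomorphic_intros)
    show "path_image (circlepath 0 r) \<subseteq> ball 0 (norm z)"
      using assms by (auto simp: path_image_circlepath_nonneg)
  qed auto
  have e: "B w / (w - z) = g w + B z / (w - z)" if "w \<noteq> z" for w
  proof -
    have "w - z \<noteq> 0" using that by simp
    then show ?thesis unfolding g_def using that by (simp add: add_divide_distrib[symmetric])
  qed
  have h1: "((\<lambda>w. B w / (w - z)) has_contour_integral (contour_integral (circlepath 0 r) g + 0)) (circlepath 0 r)"
    by (rule has_contour_integral_eq[OF has_contour_integral_add[OF g1 c1]])
       (use assms in \<open>auto simp: path_image_circlepath_nonneg intro!: e[symmetric]\<close>)
  have h2: "((\<lambda>w. B w / (w - z)) has_contour_integral (contour_integral (circlepath 0 r') g + 2 * of_real pi * \<i> * B z)) (circlepath 0 r')"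
    by (rule has_contour_integral_eq[OF has_contour_integral_add[OF g2 c2]])
       (use assms in \<open>auto simp: path_image_circlepath_nonneg intro!: e[symmetric]\<close>)
  show ?thesis unfolding hB_def using contour_integral_unique[OF h1] contour_integral_unique[OF h2] geq by simp
qed

lemma JJ_integrable:
  assumes "open SA" "A holomorphic_on SA" "open SB" "B holomorphic_on SB"
    and "0 < r1" "0 < r2" "r1 \<noteq> r2" "sphere 0 r1 \<subseteq> SA" "sphere 0 r2 \<subseteq> SB"
  shows "(\<lambda>z. A z * hB B r2 z) contour_integrable_on circlepath 0 r1"
proof (rule contour_integrable_holomorphic_simple[where S="SA \<inter> - sphere 0 r2"])
  have "continuous_on (sphere 0 r2) B"
    using assms by (meson holomorphic_on_imp_continuous_on holomorphic_on_subset)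
  then have "hB B r2 holomorphic_on (- sphere 0 r2)" using hB_holo assms by blast
  then show "(\<lambda>z. A z * hB B r2 z) holomorphic_on SA \<inter> - sphere 0 r2"
    using assms by (auto intro!: holomorphic_intros holomorphic_on_subset[OF assms(2)] elim: holomorphic_on_subset)
  show "open (SA \<inter> - sphere 0 r2)" using assms by (auto intro: open_Int simp: open_Compl)
  show "path_image (circlepath 0 r1) \<subseteq> SA \<inter> - sphere 0 r2"
    using assms by (auto simp: path_image_circlepath_nonneg)
qed auto

lemma JJ_w:
  assumes "open SB" "B holomorphic_on SB" "0 < r1" "0 < r2" "0 < r2'"
    and ann: "\<And>w. min r2 r2' \<le> norm w \<Longrightarrow> norm w \<le> max r2 r2' \<Longrightarrow> w \<in> SB"
    and z: "r1 < min r2 r2' \<or> max r2 r2' < r1"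
  shows "JJ A B r1 r2 = JJ A B r1 r2'"
  unfolding JJ_def
proof (rule contour_integral_eq)
  fix x assume "x \<in> path_image (circlepath 0 r1)"
  then have "norm x = r1" using assms by (simp add: path_image_circlepath_nonneg)
  then show "A x * hB B r2 x = A x * hB B r2' x"
    using hB_eq[OF assms(1,2,4,5) ann, of x] z by auto
qed

lemma JJ_z:
  assumes "open SA" "A holomorphic_on SA" "open SB" "B holomorphic_on SB"
    and "0 < r1" "0 < r1'" "0 < r2"
    and ann: "\<And>z. min r1 r1' \<le> norm z \<Longrightarrow> norm z \<le> max r1 r1' \<Longrightarrow> z \<in> SA"
    and "sphere 0 r2 \<subseteq> SB"
    and z: "r2 < min r1 r1' \<or> max r1 r1' < r2"
  shows "JJ A B r1 r2 = JJ A B r1' r2"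
  unfolding JJ_def
proof (rule circ_eq[where S="SA \<inter> - sphere 0 r2"])
  have "continuous_on (sphere 0 r2) B"
    using assms by (meson holomorphic_on_imp_continuous_on holomorphic_on_subset)
  then have "hB B r2 holomorphic_on (- sphere 0 r2)" using hB_holo assms by blast
  then show "(\<lambda>z. A z * hB B r2 z) holomorphic_on SA \<inter> - sphere 0 r2"
    using assms by (auto intro!: holomorphic_intros holomorphic_on_subset[OF assms(2)] elim: holomorphic_on_subset)
  show "open (SA \<inter> - sphere 0 r2)" using assms by (auto intro: open_Int simp: open_Compl)
  show "z \<in> SA \<inter> - sphere 0 r2" if "min r1 r1' \<le> norm z" "norm z \<le> max r1 r1'" for z
    using ann[OF that] that z by auto
qed (use assms in auto)

lemma JJ_jump:
  assumes "open SA" "A holomorphic_on SA" "open SB" "B holomorphic_on SB"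
    and "0 < r2" "r2 < r1" "r1 < r2'"
    and ann: "\<And>w. r2 \<le> norm w \<Longrightarrow> norm w \<le> r2' \<Longrightarrow> w \<in> SB"
    and "sphere 0 r1 \<subseteq> SA"
  shows "JJ A B r1 r2' - JJ A B r1 r2 = 2 * of_real pi * \<i> * contour_integral (circlepath 0 r1) (\<lambda>z. A z * B z)"
proof -
  have s2: "sphere 0 r2 \<subseteq> SB" "sphere 0 r2' \<subseteq> SB" using ann assms by auto
  have i2: "(\<lambda>z. A z * hB B r2' z) contour_integrable_on circlepath 0 r1"
    by (rule JJ_integrable[OF assms(1-4)]) (use assms s2 in auto)
  have i1: "(\<lambda>z. A z * hB B r2 z) contour_integrable_on circlepath 0 r1"
    by (rule JJ_integrable[OF assms(1-4)]) (use assms s2 in auto)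
  have iAB: "(\<lambda>z. A z * B z) contour_integrable_on circlepath 0 r1"
  proof (rule contour_integrable_holomorphic_simple[where S="SA \<inter> SB"])
    show "(\<lambda>z. A z * B z) holomorphic_on SA \<inter> SB"
      using assms by (auto intro!: holomorphic_intros elim: holomorphic_on_subset)
    show "path_image (circlepath 0 r1) \<subseteq> SA \<inter> SB"
      using assms ann by (auto simp: path_image_circlepath_nonneg)
  qed (use assms in auto)
  have "JJ A B r1 r2' - JJ A B r1 r2 = contour_integral (circlepath 0 r1) (\<lambda>z. A z * hB B r2' z - A z * hB B r2 z)"
    unfolding JJ_def by (rule contour_integral_diff[symmetric, OF i2 i1])
  also have "\<dots> = contour_integral (circlepath 0 r1) (\<lambda>z. (2 * of_real pi * \<i>) * (A z * B z))"
  proof (rule contour_integral_eq)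
    fix x assume "x \<in> path_image (circlepath 0 r1)"
    then have "norm x = r1" using assms by (simp add: path_image_circlepath_nonneg)
    then have "hB B r2' x - hB B r2 x = 2 * of_real pi * \<i> * B x"
      using hB_jump[OF assms(3,4,5), of x r2'] ann assms by auto
    then show "A x * hB B r2' x - A x * hB B r2 x = (2 * of_real pi * \<i>) * (A x * B x)"
      by (simp add: right_diff_distrib[symmetric])
  qed
  also have "\<dots> = 2 * of_real pi * \<i> * contour_integral (circlepath 0 r1) (\<lambda>z. A z * B z)"
    by (rule contour_integral_lmul[OF iAB])
  finally show ?thesis .
qed

lemma JJ_chain_same:
  assumes hol: "open SA" "A holomorphic_on SA" "open SB" "B holomorphic_on SB"
    and GA: "\<And>z. 0 < norm z \<Longrightarrow> norm z \<le> max r1 r1' \<Longrightarrow> z \<in> SA"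
    and GB: "\<And>w. min r2 r2' \<le> norm w \<Longrightarrow> w \<in> SB"
    and pos: "0 < r1" "0 < r1'" "0 < r2" "0 < r2'"
    and ord: "(r1 < r2 \<and> r1' < r2') \<or> (r2 < r1 \<and> r2' < r1')"
  shows "JJ A B r1 r2 = JJ A B r1' r2'"
  using ord
proof
  assume o: "r1 < r2 \<and> r1' < r2'"
  have GA': "z \<in> SA" if "min r1 r1' \<le> norm z" "norm z \<le> max r1 r1'" for z
    by (rule GA) (use that pos in \<open>auto simp: min_def split: if_splits\<close>)
  define P where "P = max r2 r2'"
  have "JJ A B r1 r2 = JJ A B r1 P"
    by (rule JJ_w[OF hol(3,4)]) (use pos o GB in \<open>auto simp: P_def\<close>)
  also have "\<dots> = JJ A B r1' P"
    by (rule JJ_z[OF hol]) (use pos o GB GA GA' in \<open>auto simp: P_def\<close>)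
  also have "\<dots> = JJ A B r1' r2'"
    by (rule JJ_w[OF hol(3,4)]) (use pos o GB in \<open>auto simp: P_def\<close>)
  finally show ?thesis .
next
  assume o: "r2 < r1 \<and> r2' < r1'"
  have GA': "z \<in> SA" if "min r1 r1' \<le> norm z" "norm z \<le> max r1 r1'" for z
    by (rule GA) (use that pos in \<open>auto simp: min_def split: if_splits\<close>)
  define P where "P = min r2 r2'"
  have "JJ A B r1 r2 = JJ A B r1 P"
    by (rule JJ_w[OF hol(3,4)]) (use pos o GB in \<open>auto simp: P_def\<close>)
  also have "\<dots> = JJ A B r1' P"
    by (rule JJ_z[OF hol]) (use pos o GB GA GA' in \<open>auto simp: P_def\<close>)
  also have "\<dots> = JJ A B r1' r2'"
    by (rule JJ_w[OF hol(3,4)]) (use pos o GB in \<open>auto simp: P_def\<close>)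
  finally show ?thesis .
qed

lemma JJ_chain_jump:
  assumes hol: "open SA" "A holomorphic_on SA" "open SB" "B holomorphic_on SB"
    and GA: "\<And>z. 0 < norm z \<Longrightarrow> norm z \<le> max r1 r1' \<Longrightarrow> z \<in> SA"
    and GB: "\<And>w. min r2 r2' \<le> norm w \<Longrightarrow> w \<in> SB"
    and pos: "0 < r1" "0 < r1'" "0 < r2" "0 < r2'"
    and o: "r1 < r2" "r2' < r1'"
  shows "JJ A B r1' r2' - JJ A B r1 r2 = - (2 * of_real pi * \<i> * contour_integral (circlepath 0 r1') (\<lambda>z. A z * B z))"
proof -
  define P where "P = max r2 (r1' + 1)"
  have GA': "z \<in> SA" if "min r1 r1' \<le> norm z" "norm z \<le> max r1 r1'" for z
    by (rule GA) (use that pos in \<open>auto simp: min_def split: if_splits\<close>)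
  have "JJ A B r1 r2 = JJ A B r1 P"
    by (rule JJ_w[OF hol(3,4)]) (use pos o GB in \<open>auto simp: P_def\<close>)
  also have "\<dots> = JJ A B r1' P"
    by (rule JJ_z[OF hol]) (use pos o GB GA GA' in \<open>auto simp: P_def\<close>)
  finally have e1: "JJ A B r1 r2 = JJ A B r1' P" .
  have "JJ A B r1' P - JJ A B r1' r2' = 2 * of_real pi * \<i> * contour_integral (circlepath 0 r1') (\<lambda>z. A z * B z)"
    by (rule JJ_jump[OF hol]) (use pos o GB GA GA' in \<open>auto simp: P_def\<close>)
  then show ?thesis using e1 by (simp add: algebra_simps)
qed

lemma ci_lmul: "contour_integral g (\<lambda>x. c * f x) = c * contour_integral g f"
proof (cases "c = 0")
  case False
  show ?thesis
  proof (cases "f contour_integrable_on g")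
    case True then show ?thesis by (rule contour_integral_lmul)
  next
    case nf: False
    have "\<not> (\<lambda>x. c * f x) contour_integrable_on g"
    proof
      assume "(\<lambda>x. c * f x) contour_integrable_on g"
      then have "(\<lambda>x. inverse c * (c * f x)) contour_integrable_on g" by (rule contour_integrable_lmul)
      then show False using nf False by (simp add: mult.assoc[symmetric])
    qed
    then show ?thesis using nf by (simp add: not_integrable_contour_integral)
  qed
qed simp

lemma ci_powi:
  assumes "0 < r"
  shows "contour_integral (circlepath 0 r) (\<lambda>z. z powi n) = (if n = -1 then 2 * of_real pi * \<i> else 0)"
proof -
  have "((\<lambda>z. (\<lambda>_. 1) z * z powi (-((-n-1)+1))) has_contour_integral
            complex_of_real (2 * pi) * \<i> * fls_nth (fls_const 1) (-n-1)) (circlepath 0 r)"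
    by (rule fls_nth_as_contour_integral[where r="r+1"]) (use assms in \<open>auto intro!: holomorphic_intros\<close>)
  then show ?thesis by (auto dest!: contour_integral_unique)
qed



lemma halfint_iff: "m \<in> halfint \<longleftrightarrow> (\<exists>k::int. m = of_int k + 1/2)"
proof
  assume "m \<in> halfint"
  then have "m - 1/2 \<in> \<int>" by (simp add: halfint_def)
  then obtain k where "m - 1/2 = of_int k" by (elim Ints_cases)
  then show "\<exists>k::int. m = of_int k + 1/2" by (intro exI[of _ k]) simp
next
  assume "\<exists>k::int. m = of_int k + 1/2"
  then obtain k :: int where "m = of_int k + 1/2" by blast
  then show "m \<in> halfint" by (simp add: halfint_def)
qed

lemma halfint_gt:
  assumes "m \<in> halfint" "real_of_int t < m" shows "real_of_int t + 1/2 \<le> m"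
proof -
  obtain k :: int where k: "m = of_int k + 1/2" using assms halfint_iff by blast
  have "real_of_int t < real_of_int (k + 1)" using assms k by simp
  then have "t \<le> k" by linarith
  then have "real_of_int t \<le> real_of_int k" by simp
  then show ?thesis using k by simp
qed

lemma halfint_lt:
  assumes "m \<in> halfint" "m < real_of_int t" shows "m \<le> real_of_int t - 1/2"
proof -
  obtain k :: int where k: "m = of_int k + 1/2" using assms halfint_iff by blast
  have "real_of_int k < real_of_int t" using assms k by simp
  then have "k + 1 \<le> t" by linarith
  then have "real_of_int k + 1 \<le> real_of_int t" by linarith
  then show ?thesis using k by simp
qed

lemma halfint_gt2:
  assumes "m \<in> halfint" "real_of_int t < m" "m \<noteq> real_of_int t + 1/2" shows "real_of_int t + 1 < m"
proof -
  obtain k :: int where k: "m = of_int k + 1/2" using assms halfint_iff by blast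
  have "real_of_int t < real_of_int (k + 1)" using assms k by simp
  then have "t \<le> k" by linarith
  moreover have "k \<noteq> t" using assms k by auto
  ultimately have "t + 1 \<le> k" by simp
  then have "real_of_int t + 1 \<le> real_of_int k" by linarith
  then show ?thesis using k by simp
qed

lemma halfint_lt2:
  assumes "m \<in> halfint" "m < real_of_int t + 1" "m \<noteq> real_of_int t + 1/2" shows "m < real_of_int t"
proof -
  obtain k :: int where k: "m = of_int k + 1/2" using assms halfint_iff by blast
  have "real_of_int k < real_of_int (t + 1)" using assms k by simp
  then have "k \<le> t" by linarith
  moreover have "k \<noteq> t" using assms k by auto
  ultimately have "k + 1 \<le> t" by simp
  then have "real_of_int k + 1 \<le> real_of_int t" by linarith
  then show ?thesis using k by simp
qed

lemma int_lt_half_iff: "(real_of_int s < real_of_int t + 1/2) \<longleftrightarrow> s \<le> t"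
proof
  assume "real_of_int s < real_of_int t + 1/2"
  then have "real_of_int s < real_of_int (t + 1)" by simp
  then show "s \<le> t" by linarith
qed simp

lemma alg_plus: fixes M P x z w :: complex assumes "1 - z*x \<noteq> 0" "P \<noteq> 0"
  shows "M / ((1 - z*x) * P) * w - x * (M / ((1 - z*x) * P) * (w * z)) = M / P * w"
proof -
  have g: "\<And>K::complex. K * w - x * (K * (w * z)) = K * (1 - z*x) * w"
    by (simp add: algebra_simps)
  have "M / ((1 - z*x) * P) * w - x * (M / ((1 - z*x) * P) * (w * z)) = (M / ((1 - z*x) * P)) * (1 - z*x) * w"
    by (rule g)
  also have "(M / ((1 - z*x) * P)) * (1 - z*x) = M / P" using assms by simp
  finally show ?thesis by simp
qed
lemma alg_minus: fixes M P x z w :: complex assumes "z \<noteq> 0"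
  shows "M / P * (w * z) - x * (M / P * w) = (1 - x / z) * M / P * (w * z)"
proof -
  have "(1 - x / z) * (w * z) = w * z - x * w" using assms by (simp add: algebra_simps)
  then have "(1 - x / z) * M / P * (w * z) = M / P * (w * z - x * w)"
    by (metis (no_types, lifting) mult.commute mult.left_commute times_divide_eq_left)
  then show ?thesis by (simp add: algebra_simps)
qed

locale kdata =
  fixes N :: nat and u v :: "nat \<Rightarrow> int" and q :: "int \<Rightarrow> real"
  assumes ord: "\<forall>i\<in>{1..N}. u (i - 1) < v i \<and> v i < u i"
    and qb: "\<forall>s. u 0 < s \<and> s < u N \<longrightarrow> 0 < q s \<and> q s < 1"
begin

lemma u_mono: assumes "i \<le> i'" "i' \<le> N" shows "u i \<le> u i'"
  using assms
proof (induction i' rule: dec_induct)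
  case (step n)
  have "Suc n \<in> {1..N}" using step by auto
  then have "u n < u (Suc n)" using ord by fastforce
  then show ?case using step by simp
qed simp

lemma D_disj: assumes "m \<in> Dplus N u v" shows "m \<notin> Dminus N u v"
proof
  assume "m \<in> Dminus N u v"
  then obtain i' where i': "i' \<in> {1..N}" "real_of_int (u (i' - 1)) < m" "m < real_of_int (v i')"
    unfolding Dminus_def by blast
  obtain i where i: "i \<in> {1..N}" "real_of_int (v i) < m" "m < real_of_int (u i)"
    using assms unfolding Dplus_def by blast
  show False
  proof (cases "i < i'")
    case True
    then have "u i \<le> u (i' - 1)" using u_mono i' by auto
    then show False using i i' by linarith
  next
    case False
    then have "i' \<le> i" by simp
    have "v i' \<le> v i"
    proof (cases "i' = i")
      case False
      then have "i' \<le> i - 1" using \<open>i' \<le> i\<close> by simp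
      then have "u i' \<le> u (i - 1)" using u_mono i by auto
      moreover have "v i' < u i'" "u (i - 1) < v i" using ord i i' by auto
      ultimately show ?thesis by simp
    qed simp
    then show False using i i' by linarith
  qed
qed

lemma halfint_box_finite: "finite {m \<in> halfint. real_of_int (u 0) < m \<and> m < real_of_int (u N)}"
proof (rule finite_subset)
  show "{m \<in> halfint. real_of_int (u 0) < m \<and> m < real_of_int (u N)} \<subseteq> (\<lambda>k. real_of_int k + 1/2) ` {u 0..u N}"
  proof
    fix m assume m: "m \<in> {m \<in> halfint. real_of_int (u 0) < m \<and> m < real_of_int (u N)}"
    then obtain k :: int where k: "m = of_int k + 1/2" using halfint_iff by blast
    have "real_of_int (u 0) < real_of_int (k + 1)" "real_of_int k < real_of_int (u N)" using m k by auto
    then have "u 0 \<le> k" "k \<le> u N" by linarith+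
    then show "m \<in> (\<lambda>k. real_of_int k + 1/2) ` {u 0..u N}" using k by auto
  qed
qed auto

lemma finite_Dplus: "finite (Dplus N u v)"
  by (rule finite_subset[OF _ halfint_box_finite]) (auto simp: Dplus_def)

lemma finite_Dminus: "finite (Dminus N u v)"
  by (rule finite_subset[OF _ halfint_box_finite]) (auto simp: Dminus_def)

lemma xp_set_finite: "finite {s::int. u 0 < s \<and> real_of_int s < m}"
proof (rule finite_subset)
  show "{s::int. u 0 < s \<and> real_of_int s < m} \<subseteq> {u 0..\<lceil>m\<rceil>}"
  proof
    fix s assume "s \<in> {s::int. u 0 < s \<and> real_of_int s < m}"
    then have "u 0 < s" "real_of_int s \<le> m" by auto
    then show "s \<in> {u 0..\<lceil>m\<rceil>}" by (simp add: le_ceiling_iff)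
  qed
qed auto

lemma xp_pos: assumes "m \<le> real_of_int (u N)" shows "0 < xplus u q m"
  unfolding xplus_def
proof (rule prod_pos)
  fix s assume "s \<in> {s::int. u 0 < s \<and> real_of_int s < m}"
  then have "u 0 < s" "s < u N" using assms by auto
  then show "0 < q s" using qb by blast
qed

lemma xp_anti: assumes "m \<le> m'" "m' \<le> real_of_int (u N)" shows "xplus u q m' \<le> xplus u q m"
proof -
  define A where "A = {s::int. u 0 < s \<and> real_of_int s < m'}"
  define B where "B = {s::int. u 0 < s \<and> real_of_int s < m}"
  have BA: "B \<subseteq> A" using assms by (auto simp: A_def B_def)
  have fA: "finite A" unfolding A_def by (rule xp_set_finite)
  have "xplus u q m' = prod q (A - B) * prod q B"
    unfolding xplus_def A_def[symmetric] by (rule prod.subset_diff[OF BA fA])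
  also have "\<dots> \<le> prod q B"
  proof (rule mult_left_le_one_le)
    show "0 \<le> prod q B" using xp_pos[of m] assms unfolding xplus_def B_def by simp
    show "0 \<le> prod q (A - B)"
      by (rule prod_nonneg) (use qb assms in \<open>force simp: A_def\<close>)
    show "prod q (A - B) \<le> 1"
      by (rule prod_le_1) (use qb assms in \<open>force simp: A_def\<close>)
  qed
  finally show ?thesis unfolding xplus_def B_def .
qed

lemma xp_step: assumes "u 0 < t1" "t1 < u N"
  shows "xplus u q (real_of_int t1 + 1/2) = q t1 * xplus u q (real_of_int t1)"
proof -
  have "{s::int. u 0 < s \<and> real_of_int s < real_of_int t1 + 1/2} = insert t1 {s::int. u 0 < s \<and> real_of_int s < real_of_int t1}"
    using assms by (auto simp: int_lt_half_iff)
  then show ?thesis unfolding xplus_def by (simp add: xp_set_finite)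
qed

lemma inv_le: "0 < (x::real) \<Longrightarrow> x \<le> y \<Longrightarrow> 1/y \<le> 1/x"
  by (rule divide_left_mono) auto

lemma F1: assumes "m \<in> Dplus N u v" "real_of_int t1 < m"
  shows "1 / xplus u q (real_of_int t1 + 1/2) \<le> 1 / xplus u q m"
proof (rule inv_le)
  have m: "m \<in> halfint" "m < real_of_int (u N)" using assms unfolding Dplus_def by auto
  show "0 < xplus u q m" using m by (intro xp_pos) simp
  show "xplus u q m \<le> xplus u q (real_of_int t1 + 1/2)"
    using m halfint_gt[OF m(1) assms(2)] by (intro xp_anti) auto
qed

lemma F2: assumes "m \<in> Dminus N u v" "m < real_of_int t2" "t2 \<le> u N"
  shows "xminus u q m \<le> 1 / xplus u q (real_of_int t2)"
  unfolding xminus_def inverse_eq_divide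
proof (rule inv_le)
  have m: "m \<in> halfint" using assms unfolding Dminus_def by auto
  show "0 < xplus u q (real_of_int t2)" using assms by (intro xp_pos) simp
  show "xplus u q (real_of_int t2) \<le> xplus u q m"
    using assms halfint_lt[OF m assms(2)] by (intro xp_anti) auto
qed

lemma adm_ex:
  assumes "u 0 < t1" "t1 < u N" "u 0 < t2" "t2 < u N"
  shows "\<exists>\<rho>. admissible_radii N u v q t1 t2 (fst \<rho>) (snd \<rho>)"
proof -
  define a1 where "a1 = 1 / xplus u q (real_of_int t1)"
  define b1 where "b1 = 1 / xplus u q (real_of_int t1 + 1/2)"
  define a2 where "a2 = 1 / xplus u q (real_of_int t2)"
  have p1: "0 < xplus u q (real_of_int t1)" using assms by (intro xp_pos) simp
  have p2: "0 < xplus u q (real_of_int t2)" using assms by (intro xp_pos) simp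
  have p3: "0 < xplus u q (real_of_int t1 + 1/2)" using assms by (intro xp_pos) simp
  have qt: "0 < q t1" "q t1 < 1" using qb assms by auto
  have "xplus u q (real_of_int t1 + 1/2) < xplus u q (real_of_int t1)"
    using xp_step[OF assms(1,2)] qt p1 by simp
  then have ab: "a1 < b1" unfolding a1_def b1_def using p3 by (simp add: divide_strict_left_mono)
  have a1p: "0 < a1" "0 < a2" using p1 p2 by (auto simp: a1_def a2_def)
  have G1: "\<forall>m\<in>Dplus N u v. real_of_int t1 < m \<longrightarrow> b1 \<le> 1 / xplus u q m"
    using F1 unfolding b1_def by blast
  have G2: "\<forall>m\<in>Dminus N u v. m < real_of_int t2 \<longrightarrow> xminus u q m \<le> a2"
    using F2 assms unfolding a2_def by force
  show ?thesis
  proof (cases "t2 \<le> t1")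
    case True
    have "a2 \<le> a1" unfolding a1_def a2_def
      by (rule inv_le[OF p1], rule xp_anti) (use True assms in auto)
    then show ?thesis
      using G1 G2 ab a1p True
      by (intro exI[of _ "((a1 + 2*b1)/3, (2*a1 + b1)/3)"])
         (auto simp: admissible_radii_def intro: less_le_trans le_less_trans)
  next
    case False
    then show ?thesis
      using G1 G2 ab a1p
      by (intro exI[of _ "(b1/2, a2 + b1)"])
         (auto simp: admissible_radii_def intro: less_le_trans le_less_trans)
  qed
qed

definition SA :: "int \<Rightarrow> complex set" where
  "SA t1 = {z. z \<noteq> 0 \<and> PhiPlus N u v q z t1 \<noteq> 0}"
definition SB :: "int \<Rightarrow> complex set" where
  "SB t2 = {w. w \<noteq> 0 \<and> PhiMinus N u v q w t2 \<noteq> 0}"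
definition Af :: "int \<Rightarrow> int \<Rightarrow> complex \<Rightarrow> complex" where
  "Af t1 a z = PhiMinus N u v q z t1 / PhiPlus N u v q z t1 * z powi a"
definition Bf :: "int \<Rightarrow> int \<Rightarrow> complex \<Rightarrow> complex" where
  "Bf t2 b w = PhiPlus N u v q w t2 / PhiMinus N u v q w t2 * w powi b"

lemma prod_nz: "(\<And>a. a \<in> A \<Longrightarrow> f a \<noteq> 0) \<Longrightarrow> prod f A \<noteq> (0::complex)"
  by (cases "finite A") auto

lemma GA:
  assumes "\<forall>m\<in>Dplus N u v. real_of_int t1 < m \<longrightarrow> r < 1 / xplus u q m" "0 < norm z" "norm z \<le> r"
  shows "z \<in> SA t1"
proof -
  have "1 - z * complex_of_real (xplus u q m) \<noteq> 0" if m: "m \<in> Dplus N u v" "real_of_int t1 < m" for m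
  proof
    assume h: "1 - z * complex_of_real (xplus u q m) = 0"
    have xp: "0 < xplus u q m" using m by (intro xp_pos) (auto simp: Dplus_def)
    have "z * complex_of_real (xplus u q m) = 1" using h by (metis right_minus_eq)
    then have "norm (z * complex_of_real (xplus u q m)) = 1" by simp
    then have "norm z * xplus u q m = 1" using xp by (simp add: norm_mult)
    then have "norm z = 1 / xplus u q m" using xp by (simp add: field_simps)
    moreover have "r < 1 / xplus u q m" using assms m by blast
    ultimately show False using assms by linarith
  qed
  then show ?thesis using assms unfolding SA_def PhiPlus_def by (auto intro!: prod_nz)
qed

lemma GB:
  assumes "0 < r" "\<forall>m\<in>Dminus N u v. m < real_of_int t2 \<longrightarrow> xminus u q m < r" "r \<le> norm w"
  shows "w \<in> SB t2"
proof -
  have w0: "w \<noteq> 0" using assms by auto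
  have "1 - complex_of_real (xminus u q m) / w \<noteq> 0" if m: "m \<in> Dminus N u v" "m < real_of_int t2" for m
  proof
    assume h: "1 - complex_of_real (xminus u q m) / w = 0"
    have xp: "0 < xminus u q m" using m unfolding xminus_def by (intro positive_imp_inverse_positive xp_pos) (auto simp: Dminus_def)
    have "w = complex_of_real (xminus u q m)" using h w0 by (simp add: field_simps)
    then have "norm w = xminus u q m" using xp by simp
    moreover have "xminus u q m < r" using assms m by blast
    ultimately show False using assms by linarith
  qed
  then show ?thesis using w0 unfolding SB_def PhiMinus_def by (auto intro!: prod_nz)
qed

lemma holo_PP: "(\<lambda>z. PhiPlus N u v q z t1) holomorphic_on S"
  unfolding PhiPlus_def by (auto intro!: holomorphic_intros)

lemma holo_PM: "(\<lambda>z. PhiMinus N u v q z t1) holomorphic_on (- {0})"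
  unfolding PhiMinus_def by (auto intro!: holomorphic_intros)

lemma open_SA: "open (SA t1)"
proof -
  have "SA t1 = (-{0}) \<inter> (\<lambda>z. PhiPlus N u v q z t1) -` (-{0})" by (auto simp: SA_def)
  then show ?thesis
    by (metis continuous_open_preimage holo_PP holomorphic_on_imp_continuous_on open_Compl closed_singleton)
qed

lemma open_SB: "open (SB t2)"
proof -
  have "SB t2 = (-{0}) \<inter> (\<lambda>z. PhiMinus N u v q z t2) -` (-{0})" by (auto simp: SB_def)
  then show ?thesis
    by (metis continuous_open_preimage holo_PM holomorphic_on_imp_continuous_on open_Compl closed_singleton)
qed

lemma holo_Af: "Af t1 a holomorphic_on SA t1"
proof -
  have "(\<lambda>z. PhiMinus N u v q z t1) holomorphic_on SA t1"
    by (rule holomorphic_on_subset[OF holo_PM]) (auto simp: SA_def)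
  then show ?thesis unfolding Af_def
    by (auto intro!: holomorphic_intros holo_PP simp: SA_def)
qed

lemma holo_Bf: "Bf t2 b holomorphic_on SB t2"
proof -
  have "(\<lambda>z. PhiMinus N u v q z t2) holomorphic_on SB t2"
    by (rule holomorphic_on_subset[OF holo_PM]) (auto simp: SB_def)
  then show ?thesis unfolding Bf_def
    by (auto intro!: holomorphic_intros holo_PP simp: SB_def)
qed

lemma Kint_JJ:
  "Kint N u v q r1 r2 t1 j1 t2 j2 =
     - JJ (Af t1 \<lfloor>- j1 - 1/2\<rfloor>) (Bf t2 \<lfloor>j2 - 1/2\<rfloor>) r1 r2 / (2 * pi * \<i>)^2"
proof -
  have e: "(PhiMinus N u v q z t1 * PhiPlus N u v q w t2) /
         (PhiPlus N u v q z t1 * PhiMinus N u v q w t2) *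
         (z powi a * w powi b) / (z - w) = - (Af t1 a z * (Bf t2 b w / (w - z)))" for z w a b
  proof -
    have "z - w = - (w - z)" by simp
    then show ?thesis unfolding Af_def Bf_def
      by (simp only: divide_inverse inverse_mult_distrib inverse_minus_eq) (simp add: mult_ac)
  qed
  show ?thesis unfolding Kint_def e contour_integral_neg ci_lmul JJ_def hB_def by simp
qed

lemma split_plus:
  assumes m: "real_of_int t + 1/2 \<in> Dplus N u v"
  shows "PhiPlus N u v q z t = (1 - z * complex_of_real (xplus u q (real_of_int t + 1/2))) * PhiPlus N u v q z (t+1)"
    and "PhiMinus N u v q z t = PhiMinus N u v q z (t+1)"
proof -
  have S: "{m \<in> Dplus N u v. real_of_int t < m} = insert (real_of_int t + 1/2) {m \<in> Dplus N u v. real_of_int (t+1) < m}"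
  proof (intro equalityI subsetI)
    fix x assume x: "x \<in> {m \<in> Dplus N u v. real_of_int t < m}"
    then have "x \<in> halfint" by (auto simp: Dplus_def)
    then show "x \<in> insert (real_of_int t + 1/2) {m \<in> Dplus N u v. real_of_int (t+1) < m}"
      using x halfint_gt2[of x t] by auto
  qed (use m in auto)
  have fin: "finite {m \<in> Dplus N u v. real_of_int (t+1) < m}" using finite_Dplus by simp
  show "PhiPlus N u v q z t = (1 - z * complex_of_real (xplus u q (real_of_int t + 1/2))) * PhiPlus N u v q z (t+1)"
    unfolding PhiPlus_def S using fin by (subst prod.insert) auto
  have S2: "{m \<in> Dminus N u v. m < real_of_int t} = {m \<in> Dminus N u v. m < real_of_int (t+1)}"
  proof (intro equalityI subsetI)
    fix x assume x: "x \<in> {m \<in> Dminus N u v. m < real_of_int (t+1)}"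
    then have "x \<in> halfint" by (auto simp: Dminus_def)
    moreover have "x \<noteq> real_of_int t + 1/2" using x D_disj[OF m] by auto
    ultimately show "x \<in> {m \<in> Dminus N u v. m < real_of_int t}"
      using x halfint_lt2[of x t] by auto
  qed auto
  show "PhiMinus N u v q z t = PhiMinus N u v q z (t+1)"
    unfolding PhiMinus_def S2 ..
qed

lemma split_minus:
  assumes m: "real_of_int t + 1/2 \<in> Dminus N u v"
  shows "PhiMinus N u v q z (t+1) = (1 - complex_of_real (xminus u q (real_of_int t + 1/2)) / z) * PhiMinus N u v q z t"
    and "PhiPlus N u v q z (t+1) = PhiPlus N u v q z t"
proof -
  have S: "{m \<in> Dminus N u v. m < real_of_int (t+1)} = insert (real_of_int t + 1/2) {m \<in> Dminus N u v. m < real_of_int t}"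
  proof (intro equalityI subsetI)
    fix x assume x: "x \<in> {m \<in> Dminus N u v. m < real_of_int (t+1)}"
    then have "x \<in> halfint" by (auto simp: Dminus_def)
    then show "x \<in> insert (real_of_int t + 1/2) {m \<in> Dminus N u v. m < real_of_int t}"
      using x halfint_lt2[of x t] by auto
  qed (use m in auto)
  have fin: "finite {m \<in> Dminus N u v. m < real_of_int t}" using finite_Dminus by simp
  show "PhiMinus N u v q z (t+1) = (1 - complex_of_real (xminus u q (real_of_int t + 1/2)) / z) * PhiMinus N u v q z t"
    unfolding PhiMinus_def S using fin by (subst prod.insert) auto
  have S2: "{m \<in> Dplus N u v. real_of_int (t+1) < m} = {m \<in> Dplus N u v. real_of_int t < m}"
  proof (intro equalityI subsetI)
    fix x assume x: "x \<in> {m \<in> Dplus N u v. real_of_int t < m}"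
    then have "x \<in> halfint" by (auto simp: Dplus_def)
    moreover have "x \<noteq> real_of_int t + 1/2" using x D_disj m by auto
    ultimately show "x \<in> {m \<in> Dplus N u v. real_of_int (t+1) < m}"
      using x halfint_gt2[of x t] by auto
  qed auto
  show "PhiPlus N u v q z (t+1) = PhiPlus N u v q z t"
    unfolding PhiPlus_def S2 ..
qed

lemma Af_plus:
  assumes m: "real_of_int t + 1/2 \<in> Dplus N u v" and z: "z \<in> SA t"
  shows "Af t a z - complex_of_real (xplus u q (real_of_int t + 1/2)) * Af t (a+1) z = Af (t+1) a z"
proof -
  define x where "x = complex_of_real (xplus u q (real_of_int t + 1/2))"
  define P where "P = PhiPlus N u v q z (t+1)"
  define M where "M = PhiMinus N u v q z (t+1)"
  have z0: "z \<noteq> 0" and PP: "PhiPlus N u v q z t \<noteq> 0" using z by (auto simp: SA_def)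
  have e1: "PhiPlus N u v q z t = (1 - z * x) * P" unfolding x_def P_def by (rule split_plus(1)[OF m])
  have e2: "PhiMinus N u v q z t = M" unfolding M_def by (rule split_plus(2)[OF m])
  have nz: "1 - z * x \<noteq> 0" "P \<noteq> 0" using PP e1 by auto
  have pw: "z powi (a+1) = z powi a * z" using z0 by (simp add: power_int_add_1)
  show ?thesis
    unfolding Af_def e1 e2 pw x_def[symmetric] P_def[symmetric] M_def[symmetric]
    using nz by (rule alg_plus)
qed

lemma Af_minus:
  assumes m: "real_of_int t + 1/2 \<in> Dminus N u v" and z: "z \<in> SA t"
  shows "Af t a z - complex_of_real (xminus u q (real_of_int t + 1/2)) * Af t (a-1) z = Af (t+1) a z"
proof -
  define x where "x = complex_of_real (xminus u q (real_of_int t + 1/2))"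
  define P where "P = PhiPlus N u v q z t"
  define M where "M = PhiMinus N u v q z t"
  have z0: "z \<noteq> 0" using z by (auto simp: SA_def)
  have e1: "PhiMinus N u v q z (t+1) = (1 - x / z) * M" unfolding x_def M_def by (rule split_minus(1)[OF m])
  have e2: "PhiPlus N u v q z (t+1) = P" unfolding P_def by (rule split_minus(2)[OF m])
  have pw: "z powi a = z powi (a-1) * z" using z0 power_int_add_1[of z "a-1"] by simp
  show ?thesis
    unfolding Af_def e1 e2 pw x_def[symmetric] P_def[symmetric] M_def[symmetric]
    using z0 by (rule alg_minus)
qed

lemma div_combine: "- X / C - (- Y / C) + c * (- Z / C) = - (X - (Y - c * Z)) / (C::complex)"
  by (simp add: diff_divide_distrib add_divide_distrib algebra_simps)

lemma core:
  assumes tb: "u 0 < t" "t + 1 < u N" "u 0 < t'" "t' < u N"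
    and \<sigma>: "admissible_radii N u v q t t' s1 s2"
    and \<rho>: "admissible_radii N u v q (t+1) t' r1 r2"
    and comb: "\<And>z. z \<in> SA t \<Longrightarrow> Af t a z - c * Af t a2 z = Af (t+1) a z"
  shows "- JJ (Af (t+1) a) (Bf t' b) r1 r2 / (2*pi*\<i>)^2 - (- JJ (Af t a) (Bf t' b) s1 s2 / (2*pi*\<i>)^2)
          + c * (- JJ (Af t a2) (Bf t' b) s1 s2 / (2*pi*\<i>)^2) = (if t + 1 = t' \<and> a + b = -1 then 1 else 0)"
proof -
  define A where "A = Af (t+1) a"
  define B where "B = Bf t' b"
  have s: "0 < s1" "0 < s2" "\<forall>m\<in>Dplus N u v. real_of_int t < m \<longrightarrow> s1 < 1 / xplus u q m"
     "\<forall>m\<in>Dminus N u v. m < real_of_int t' \<longrightarrow> xminus u q m < s2" "t' \<le> t \<longrightarrow> s2 < s1" "t < t' \<longrightarrow> s1 < s2"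
    using \<sigma> unfolding admissible_radii_def by auto
  have r: "0 < r1" "0 < r2" "\<forall>m\<in>Dplus N u v. real_of_int (t+1) < m \<longrightarrow> r1 < 1 / xplus u q m"
     "\<forall>m\<in>Dminus N u v. m < real_of_int t' \<longrightarrow> xminus u q m < r2" "t' \<le> t+1 \<longrightarrow> r2 < r1" "t+1 < t' \<longrightarrow> r1 < r2"
    using \<rho> unfolding admissible_radii_def by auto
  have hol: "open (SA (t+1))" "A holomorphic_on SA (t+1)" "open (SB t')" "B holomorphic_on SB t'"
    unfolding A_def B_def by (auto intro: open_SA open_SB holo_Af holo_Bf)
  have GAall: "z \<in> SA (t+1)" if "0 < norm z" "norm z \<le> max s1 r1" for z
  proof (rule GA[OF _ that])
    show "\<forall>m\<in>Dplus N u v. real_of_int (t+1) < m \<longrightarrow> max s1 r1 < 1 / xplus u q m"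
      using s(3) r(3) by force
  qed
  have GBall: "w \<in> SB t'" if "min s2 r2 \<le> norm w" for w
  proof (rule GB[OF _ _ that])
    show "0 < min s2 r2" using s r by simp
    show "\<forall>m\<in>Dminus N u v. m < real_of_int t' \<longrightarrow> xminus u q m < min s2 r2"
      using s(4) r(4) by force
  qed
  have GAt: "z \<in> SA t" if "norm z = s1" for z
    by (rule GA[OF s(3)]) (use that s in auto)
  have sne: "s1 \<noteq> s2" using s(5,6) by (cases "t' \<le> t") auto
  have sph1: "sphere 0 s1 \<subseteq> SA t" using GAt by auto
  have sph2: "sphere 0 s2 \<subseteq> SB t'" using GBall by auto
  have i1: "(\<lambda>z. Af t a z * hB B s2 z) contour_integrable_on circlepath 0 s1"
    unfolding B_def by (rule JJ_integrable[OF open_SA holo_Af open_SB holo_Bf s(1,2) sne sph1 sph2])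
  have i2: "(\<lambda>z. Af t a2 z * hB B s2 z) contour_integrable_on circlepath 0 s1"
    unfolding B_def by (rule JJ_integrable[OF open_SA holo_Af open_SB holo_Bf s(1,2) sne sph1 sph2])
  have comb2: "JJ (Af t a) B s1 s2 - c * JJ (Af t a2) B s1 s2 = JJ A B s1 s2"
  proof -
    have "JJ (Af t a) B s1 s2 - c * JJ (Af t a2) B s1 s2
        = contour_integral (circlepath 0 s1) (\<lambda>z. Af t a z * hB B s2 z - c * (Af t a2 z * hB B s2 z))"
      unfolding JJ_def by (subst contour_integral_diff[OF i1 contour_integrable_lmul[OF i2]]) (simp add: ci_lmul)
    also have "\<dots> = JJ A B s1 s2" unfolding JJ_def
    proof (rule contour_integral_eq)
      fix x assume "x \<in> path_image (circlepath 0 s1)"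
      then have "norm x = s1" using s by (simp add: path_image_circlepath_nonneg)
      then have "Af t a x - c * Af t a2 x = A x" unfolding A_def by (intro comb GAt)
      then show "Af t a x * hB B s2 x - c * (Af t a2 x * hB B s2 x) = A x * hB B s2 x"
        by (metis (no_types, lifting) left_diff_distrib mult.assoc)
    qed
    finally show ?thesis .
  qed
  have L: "?thesis \<longleftrightarrow> - (JJ A B r1 r2 - JJ A B s1 s2) / (2*pi*\<i>)^2 = (if t + 1 = t' \<and> a + b = -1 then 1 else 0)"
    using comb2 unfolding div_combine A_def B_def by simp
  show ?thesis
  proof (cases "t + 1 = t'")
    case True
    have o: "s1 < s2" "r2 < r1" using s r True by auto
    have jump: "JJ A B r1 r2 - JJ A B s1 s2 = - (2 * of_real pi * \<i> * contour_integral (circlepath 0 r1) (\<lambda>z. A z * B z))"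
      by (rule JJ_chain_jump[OF hol GAall GBall s(1) r(1) s(2) r(2) o])
    have "contour_integral (circlepath 0 r1) (\<lambda>z. A z * B z) = contour_integral (circlepath 0 r1) (\<lambda>z. z powi (a + b))"
    proof (rule contour_integral_eq)
      fix z assume "z \<in> path_image (circlepath 0 r1)"
      then have nz: "norm z = r1" using r by (simp add: path_image_circlepath_nonneg)
      have zA: "z \<in> SA (t+1)" using nz r(1) by (intro GAall) auto
      have zB: "z \<in> SB (t+1)" using nz o GBall True by fastforce
      have "z \<noteq> 0" "PhiPlus N u v q z (t+1) \<noteq> 0" "PhiMinus N u v q z (t+1) \<noteq> 0"
        using zA zB by (auto simp: SA_def SB_def)
      then show "A z * B z = z powi (a + b)"
        unfolding A_def B_def Af_def Bf_def True[symmetric] by (simp add: power_int_add field_simps)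
    qed
    also have "\<dots> = (if a + b = -1 then 2 * of_real pi * \<i> else 0)" by (rule ci_powi[OF r(1)])
    finally have I: "contour_integral (circlepath 0 r1) (\<lambda>z. A z * B z) = (if a + b = -1 then 2 * of_real pi * \<i> else 0)" .
    show ?thesis unfolding L jump I using True by (simp add: power2_eq_square)
  next
    case False
    have o: "(s1 < s2 \<and> r1 < r2) \<or> (s2 < s1 \<and> r2 < r1)"
      using s r False by (cases "t' \<le> t") auto
    have "JJ A B s1 s2 = JJ A B r1 r2"
      by (rule JJ_chain_same[OF hol GAall GBall s(1) r(1) s(2) r(2) o])
    then show ?thesis unfolding L using False by simp
  qed
qed

end
theorem mainTheorem4:
  fixes N :: nat and u v :: "nat \<Rightarrow> int" and q :: "int \<Rightarrow> real"
    and t t' :: int and j j' :: real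
  assumes "N \<ge> 1"
    and "\<forall>i\<in>{1..N}. u (i - 1) < v i \<and> v i < u i"
    and "\<forall>s. u 0 < s \<and> s < u N \<longrightarrow> 0 < q s \<and> q s < 1"
    and "u 0 < t" and "t + 1 < u N"
    and "u 0 < t'" and "t' < u N"
    and "j \<in> halfint" and "j' \<in> halfint"
  shows "(real_of_int t + 1/2 \<in> Dplus N u v \<longrightarrow>
            K N u v q (t + 1) j t' j' - K N u v q t j t' j'
            + complex_of_real (xplus u q (real_of_int t + 1/2)) * K N u v q t (j - 1) t' j'
            = (if t + 1 = t' \<and> j = j' then 1 else 0)) \<and>
         (real_of_int t + 1/2 \<in> Dminus N u v \<longrightarrow>
            K N u v q (t + 1) j t' j' - K N u v q t j t' j'
            + complex_of_real (xminus u q (real_of_int t + 1/2)) * K N u v q t (j + 1) t' j'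
            = (if t + 1 = t' \<and> j = j' then 1 else 0))"
proof -
  interpret kdata N u v q using assms(2,3) by unfold_locales
  obtain k :: int where k: "j = of_int k + 1/2" using assms(8) halfint_iff by blast
  obtain k' :: int where k': "j' = of_int k' + 1/2" using assms(9) halfint_iff by blast
  define a where "a = - k - 1"
  define b where "b = k'"
  have "- j - 1/2 = real_of_int a" by (simp add: k a_def)
  then have fa1: "\<lfloor>- j - 1/2\<rfloor> = a" by simp
  have "- (j - 1) - 1/2 = real_of_int (a + 1)" by (simp add: k a_def)
  then have fa2: "\<lfloor>- (j - 1) - 1/2\<rfloor> = a + 1" by linarith
  have "- (j + 1) - 1/2 = real_of_int (a - 1)" by (simp add: k a_def)
  then have fa3: "\<lfloor>- (j + 1) - 1/2\<rfloor> = a - 1" by linarith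
  have "j' - 1/2 = real_of_int b" by (simp add: k' b_def)
  then have fb: "\<lfloor>j' - 1/2\<rfloor> = b" by simp
  have ab: "a + b = -1 \<longleftrightarrow> j = j'"
  proof
    assume "a + b = -1" then have "k = k'" by (simp add: a_def b_def)
    then show "j = j'" using k k' by simp
  next
    assume "j = j'" then have "real_of_int k = real_of_int k'" using k k' by simp
    then have "k = k'" by simp
    then show "a + b = -1" by (simp add: a_def b_def)
  qed
  define \<rho> where "\<rho> = (SOME \<rho>. admissible_radii N u v q (t+1) t' (fst \<rho>) (snd \<rho>))"
  define \<sigma> where "\<sigma> = (SOME \<rho>. admissible_radii N u v q t t' (fst \<rho>) (snd \<rho>))"
  have adm\<rho>: "admissible_radii N u v q (t+1) t' (fst \<rho>) (snd \<rho>)"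
    unfolding \<rho>_def by (rule someI_ex[OF adm_ex]) (use assms in auto)
  have adm\<sigma>: "admissible_radii N u v q t t' (fst \<sigma>) (snd \<sigma>)"
    unfolding \<sigma>_def by (rule someI_ex[OF adm_ex]) (use assms in auto)
  have K1: "K N u v q (t+1) j t' j' = - JJ (Af (t+1) a) (Bf t' b) (fst \<rho>) (snd \<rho>) / (2*pi*\<i>)^2"
    unfolding K_def Let_def \<rho>_def[symmetric] Kint_JJ fa1 fb ..
  have K2: "K N u v q t j t' j' = - JJ (Af t a) (Bf t' b) (fst \<sigma>) (snd \<sigma>) / (2*pi*\<i>)^2"
    unfolding K_def Let_def \<sigma>_def[symmetric] Kint_JJ fa1 fb ..
  have K3: "K N u v q t (j - 1) t' j' = - JJ (Af t (a+1)) (Bf t' b) (fst \<sigma>) (snd \<sigma>) / (2*pi*\<i>)^2"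
    unfolding K_def Let_def \<sigma>_def[symmetric] Kint_JJ fa2 fb ..
  have K4: "K N u v q t (j + 1) t' j' = - JJ (Af t (a-1)) (Bf t' b) (fst \<sigma>) (snd \<sigma>) / (2*pi*\<i>)^2"
    unfolding K_def Let_def \<sigma>_def[symmetric] Kint_JJ fa3 fb ..
  have tb: "u 0 < t" "t + 1 < u N" "u 0 < t'" "t' < u N" using assms by auto
  show ?thesis
  proof (intro conjI impI)
    assume m: "real_of_int t + 1/2 \<in> Dplus N u v"
    have "K N u v q (t + 1) j t' j' - K N u v q t j t' j'
            + complex_of_real (xplus u q (real_of_int t + 1/2)) * K N u v q t (j - 1) t' j'
          = (if t + 1 = t' \<and> a + b = -1 then 1 else 0)"
      unfolding K1 K2 K3 by (rule core[OF tb adm\<sigma> adm\<rho>]) (rule Af_plus[OF m])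
    then show "K N u v q (t + 1) j t' j' - K N u v q t j t' j'
            + complex_of_real (xplus u q (real_of_int t + 1/2)) * K N u v q t (j - 1) t' j'
            = (if t + 1 = t' \<and> j = j' then 1 else 0)" using ab by simp
  next
    assume m: "real_of_int t + 1/2 \<in> Dminus N u v"
    have "K N u v q (t + 1) j t' j' - K N u v q t j t' j'
            + complex_of_real (xminus u q (real_of_int t + 1/2)) * K N u v q t (j + 1) t' j'
          = (if t + 1 = t' \<and> a + b = -1 then 1 else 0)"
      unfolding K1 K2 K4 by (rule core[OF tb adm\<sigma> adm\<rho>]) (rule Af_minus[OF m])
    then show "K N u v q (t + 1) j t' j' - K N u v q t j t' j'
            + complex_of_real (xminus u q (real_of_int t + 1/2)) * K N u v q t (j + 1) t' j'
            = (if t + 1 = t' \<and> j = j' then 1 else 0)" using ab by simp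
  qed
qed

end
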